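(* Let $C=\mathtt{while}(\varphi)\{C_{\mathrm{body}}\}[I]$ be a (possibly nested) $\mathsf{pGCL}$ loop and let $f\in\mathbb{E}$. If $\mathrm{vc}^{\mathsf{dPASTSUBINV},\mathrm{awp}}[\![C]\!](f)$ holds, then $\mathrm{awp}[\![C]\!](f)\ge I$.
   Context: States: fix a countably infinite set of program variables with values in $\mathbb{Q}_{\ge 0}$; a state is a map $\sigma$ from variables to $\mathbb{Q}_{\ge0}$ which is $0$ for all but finitely many variables; $\mathsf{States}$ is the set of states. A predicate is a map $\varphi:\mathsf{States}\to\{\mathsf{true},\mathsf{false}\}$. Expectations: $\mathbb{E}$ is the set of maps $\mathsf{States}\to[0,\infty]$, ordered pointwise ($\le,\ge$); $+,\cdot$ pointwise with $0\cdot\infty=0$; $\sqcap,\sqcup$ pointwise min/max; $[\varphi]$ Iverson bracket; $(\varphi\to g)(\sigma)=g(\sigma)$ if $\sigma\models\varphi$, else $\infty$; $f[x/E](\sigma)=f(\sigma[x\mapsto E(\sigma)])$. Programs of $\mathsf{pGCL}$: $C ::= \mathtt{skip} \mid x:=E \mid C;C \mid \mathtt{if}\ \varphi_1\to C\ \square\ \varphi_2\to C \mid \{C\}[p]\{C\} \mid \mathtt{while}(\varphi)\{C\}[I]$, where $E:\mathsf{States}\to\mathbb{Q}_{\ge0}$, $p:\mathsf{States}\to[0,1]$, in every guarded choice $\varphi_1\vee\varphi_2$ is valid (when both hold the choice is nondeterministic), and every loop carries an invariant annotation $I\in\mathbb{E}$. Weakest preexpectations for $\mathcal{T}\in\{\mathrm{dwp},\mathrm{awp}\}$: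 $\mathcal{T}[\![\mathtt{skip}]\!](f)=f$; $\mathcal{T}[\![x:=E]\!](f)=f[x/E]$; $\mathcal{T}[\![C_1;C_2]\!](f)=\mathcal{T}[\![C_1]\!](\mathcal{T}[\![C_2]\!](f))$; $\mathrm{dwp}$ of a guarded choice: $(\varphi_1\to\mathrm{dwp}[\![C_1]\!](f))\sqcap(\varphi_2\to\mathrm{dwp}[\![C_2]\!](f))$; $\mathrm{awp}$ of a guarded choice: $[\varphi_1]\cdot\mathrm{awp}[\![C_1]\!](f)\sqcup[\varphi_2]\cdot\mathrm{awp}[\![C_2]\!](f)$; $\mathcal{T}[\![\{C_1\}[p]\{C_2\}]\!](f)=p\cdot\mathcal{T}[\![C_1]\!](f)+(1-p)\cdot\mathcal{T}[\![C_2]\!](f)$; loops: least fixpoint of $g\mapsto[\neg\varphi]\cdot f+[\varphi]\cdot\mathcal{T}[\![C']\!](g)$. $\mathrm{awp}^*$ follows the $\mathrm{awp}$ rules except $\mathrm{awp}^*[\![\mathtt{while}(\varphi)\{C'\}[I]]\!](f)=I$. A loop is dPAST (positively demonically almost-surely terminating) if its expected runtime (in the sense of the expected-runtime calculus of Kaminski et al., resolving nondeterminism in the worst case) is finite for all initial states. A loop $\mathtt{while}(\varphi)\{C_{\mathrm{body}}\}[I]$ is suitable for optional stopping w.r.t. $f$ if (i) $I=[\varphi]\cdot I'+[\neg\varphi]\cdot f$ for some $I'\in\mathbb{E}$, (ii) $f$, $I$ and $[\varphi]\cdot\mathrm{awp}[\![C_{\mathrm{body}}]\!](I)+[\neg\varphi]\cdot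 f$ are pointwise $<\infty$, and (iii) there is $b\in\mathbb{R}_{\ge0}$ with $([\varphi]\cdot\mathrm{awp}[\![C_{\mathrm{body}}]\!](\lambda\tau.|I(\tau)-I(\sigma)|))(\sigma)\le b$ for all $\sigma$. The provider $\mathsf{dPASTSUBINV}$ assigns to a loop $L=\mathtt{while}(\varphi)\{C_{\mathrm{body}}\}[I]$ and $g\in\mathbb{E}$ the value $\mathsf{true}$ iff $[\varphi]\cdot\mathrm{awp}^*[\![C_{\mathrm{body}}]\!](I)+[\neg\varphi]\cdot g\ge I$, $L$ is dPAST, and $L$ is suitable for optional stopping w.r.t. $g$. For a provider $\mathfrak{C}$ (a map from annotated loops and expectations to truth values), $\mathrm{vc}^{\mathfrak{C},\mathrm{awp}}[\![C]\!](f)$ is defined inductively: $\mathsf{true}$ for $\mathtt{skip}$ and assignments; $\mathrm{vc}[\![C_1]\!](\mathrm{awp}^*[\![C_2]\!](f))\wedge\mathrm{vc}[\![C_2]\!](f)$ for $C_1;C_2$; $\mathrm{vc}[\![C_1]\!](f)\wedge\mathrm{vc}[\![C_2]\!](f)$ for guarded and probabilistic choices; $\mathfrak{C}(\mathtt{while}(\varphi)\{C'\}[I],f)\wedge\mathrm{vc}[\![C']\!](I)$ for loops. *)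

theory Defs
  imports Main "HOL-Library.Extended_Nonnegative_Real"
begin

typedef state = "{\<sigma> :: nat \<Rightarrow> rat. (\<forall>x. \<sigma> x \<ge> 0) \<and> finite {x. \<sigma> x \<noteq> 0}}"
  by (rule exI[of _ "\<lambda>_. 0"]) simp

definition upd :: "state \<Rightarrow> nat \<Rightarrow> rat \<Rightarrow> state" where
  "upd \<sigma> x v = Abs_state ((Rep_state \<sigma>)(x := v))"

type_synonym pred = "state \<Rightarrow> bool"
type_synonym expect = "state \<Rightarrow> ennreal"

definition iv :: "pred \<Rightarrow> expect" where
  "iv \<phi> = (\<lambda>\<sigma>. if \<phi> \<sigma> then 1 else 0)"

definition guard_to :: "pred \<Rightarrow> expect \<Rightarrow> expect" where
  "guard_to \<phi> g = (\<lambda>\<sigma>. if \<phi> \<sigma> then g \<sigma> else \<infinity>)"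

definition subst :: "expect \<Rightarrow> nat \<Rightarrow> (state \<Rightarrow> rat) \<Rightarrow> expect" where
  "subst f x E = (\<lambda>\<sigma>. f (upd \<sigma> x (E \<sigma>)))"

datatype pgcl =
    Skip
  | Assign nat "state \<Rightarrow> rat"
  | Seq pgcl pgcl
  | GChoice pred pgcl pred pgcl
  | PChoice pgcl "state \<Rightarrow> real" pgcl
  | While pred pgcl expect         \<comment> \<open>while(phi){C}[I]\<close>

primrec wf_pgcl :: "pgcl \<Rightarrow> bool" where
  "wf_pgcl Skip = True"
| "wf_pgcl (Assign x E) = (\<forall>\<sigma>. E \<sigma> \<ge> 0)"
| "wf_pgcl (Seq C1 C2) = (wf_pgcl C1 \<and> wf_pgcl C2)"
| "wf_pgcl (GChoice \<phi>1 C1 \<phi>2 C2) = ((\<forall>\<sigma>. \<phi>1 \<sigma> \<or> \<phi>2 \<sigma>) \<and> wf_pgcl C1 \<and> wf_pgcl C2)"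
| "wf_pgcl (PChoice C1 p C2) = ((\<forall>\<sigma>. 0 \<le> p \<sigma> \<and> p \<sigma> \<le> 1) \<and> wf_pgcl C1 \<and> wf_pgcl C2)"
| "wf_pgcl (While \<phi> C I) = wf_pgcl C"

definition pmix :: "(state \<Rightarrow> real) \<Rightarrow> expect \<Rightarrow> expect \<Rightarrow> expect" where
  "pmix p g h = (\<lambda>\<sigma>. ennreal (p \<sigma>) * g \<sigma> + ennreal (1 - p \<sigma>) * h \<sigma>)"

definition loop_char :: "pred \<Rightarrow> (expect \<Rightarrow> expect) \<Rightarrow> expect \<Rightarrow> expect \<Rightarrow> expect" where
  "loop_char \<phi> T f g = (\<lambda>\<sigma>. iv (\<lambda>s. \<not> \<phi> s) \<sigma> * f \<sigma> + iv \<phi> \<sigma> * T g \<sigma>)"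

primrec dwp :: "pgcl \<Rightarrow> expect \<Rightarrow> expect" where
  "dwp Skip f = f"
| "dwp (Assign x E) f = subst f x E"
| "dwp (Seq C1 C2) f = dwp C1 (dwp C2 f)"
| "dwp (GChoice \<phi>1 C1 \<phi>2 C2) f =
     (\<lambda>\<sigma>. min (guard_to \<phi>1 (dwp C1 f) \<sigma>) (guard_to \<phi>2 (dwp C2 f) \<sigma>))"
| "dwp (PChoice C1 p C2) f = pmix p (dwp C1 f) (dwp C2 f)"
| "dwp (While \<phi> C I) f = lfp (loop_char \<phi> (dwp C) f)"

primrec awp :: "pgcl \<Rightarrow> expect \<Rightarrow> expect" where
  "awp Skip f = f"
| "awp (Assign x E) f = subst f x E"
| "awp (Seq C1 C2) f = awp C1 (awp C2 f)"
| "awp (GChoice \<phi>1 C1 \<phi>2 C2) f =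
     (\<lambda>\<sigma>. max (iv \<phi>1 \<sigma> * awp C1 f \<sigma>) (iv \<phi>2 \<sigma> * awp C2 f \<sigma>))"
| "awp (PChoice C1 p C2) f = pmix p (awp C1 f) (awp C2 f)"
| "awp (While \<phi> C I) f = lfp (loop_char \<phi> (awp C) f)"

primrec awp_star :: "pgcl \<Rightarrow> expect \<Rightarrow> expect" where
  "awp_star Skip f = f"
| "awp_star (Assign x E) f = subst f x E"
| "awp_star (Seq C1 C2) f = awp_star C1 (awp_star C2 f)"
| "awp_star (GChoice \<phi>1 C1 \<phi>2 C2) f =
     (\<lambda>\<sigma>. max (iv \<phi>1 \<sigma> * awp_star C1 f \<sigma>) (iv \<phi>2 \<sigma> * awp_star C2 f \<sigma>))"
| "awp_star (PChoice C1 p C2) f = pmix p (awp_star C1 f) (awp_star C2 f)"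
| "awp_star (While \<phi> C I) f = I"

primrec ert :: "pgcl \<Rightarrow> expect \<Rightarrow> expect" where
  "ert Skip f = (\<lambda>\<sigma>. 1 + f \<sigma>)"
| "ert (Assign x E) f = (\<lambda>\<sigma>. 1 + subst f x E \<sigma>)"
| "ert (Seq C1 C2) f = ert C1 (ert C2 f)"
| "ert (GChoice \<phi>1 C1 \<phi>2 C2) f =
     (\<lambda>\<sigma>. 1 + max (iv \<phi>1 \<sigma> * ert C1 f \<sigma>) (iv \<phi>2 \<sigma> * ert C2 f \<sigma>))"
| "ert (PChoice C1 p C2) f = (\<lambda>\<sigma>. 1 + pmix p (ert C1 f) (ert C2 f) \<sigma>)"
| "ert (While \<phi> C I) f = lfp (\<lambda>g \<sigma>. 1 + loop_char \<phi> (ert C) f g \<sigma>)"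

definition dPAST :: "pgcl \<Rightarrow> bool" where
  "dPAST C = (\<forall>\<sigma>. ert C (\<lambda>_. 0) \<sigma> < \<infinity>)"

text \<open>Absolute difference on ennreal (exact whenever both arguments are finite).\<close>
definition adiff :: "ennreal \<Rightarrow> ennreal \<Rightarrow> ennreal" where
  "adiff a b = (a - b) + (b - a)"

definition suitable_os :: "pred \<Rightarrow> pgcl \<Rightarrow> expect \<Rightarrow> expect \<Rightarrow> bool" where
  "suitable_os \<phi> Cb I f =
     ((\<exists>I'. I = (\<lambda>\<sigma>. iv \<phi> \<sigma> * I' \<sigma> + iv (\<lambda>s. \<not> \<phi> s) \<sigma> * f \<sigma>)) \<and>
      (\<forall>\<sigma>. f \<sigma> < \<infinity>) \<and> (\<forall>\<sigma>. I \<sigma> < \<infinity>) \<and>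
      (\<forall>\<sigma>. iv \<phi> \<sigma> * awp Cb I \<sigma> + iv (\<lambda>s. \<not> \<phi> s) \<sigma> * f \<sigma> < \<infinity>) \<and>
      (\<exists>b::real. b \<ge> 0 \<and>
         (\<forall>\<sigma>. iv \<phi> \<sigma> * awp Cb (\<lambda>\<tau>. adiff (I \<tau>) (I \<sigma>)) \<sigma> \<le> ennreal b)))"

type_synonym provider = "pgcl \<Rightarrow> expect \<Rightarrow> bool"

fun dPASTSUBINV :: provider where
  "dPASTSUBINV (While \<phi> Cb I) g =
     ((\<forall>\<sigma>. I \<sigma> \<le> iv \<phi> \<sigma> * awp_star Cb I \<sigma> + iv (\<lambda>s. \<not> \<phi> s) \<sigma> * g \<sigma>) \<and>
      dPAST (While \<phi> Cb I) \<and> suitable_os \<phi> Cb I g)"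
| "dPASTSUBINV _ g = False"

primrec vc_awp :: "provider \<Rightarrow> pgcl \<Rightarrow> expect \<Rightarrow> bool" where
  "vc_awp P Skip f = True"
| "vc_awp P (Assign x E) f = True"
| "vc_awp P (Seq C1 C2) f = (vc_awp P C1 (awp_star C2 f) \<and> vc_awp P C2 f)"
| "vc_awp P (GChoice \<phi>1 C1 \<phi>2 C2) f = (vc_awp P C1 f \<and> vc_awp P C2 f)"
| "vc_awp P (PChoice C1 p C2) f = (vc_awp P C1 f \<and> vc_awp P C2 f)"
| "vc_awp P (While \<phi> C I) f = (P (While \<phi> C I) f \<and> vc_awp P C I)"

end

theory Submission
  imports Defs "HOL-Probability.Probability_Mass_Function"
begin

definition E :: "state option pmf \<Rightarrow> (state \<Rightarrow> ennreal) \<Rightarrow> ennreal" where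
  "E \<mu> g = (\<integral>\<^sup>+z. case_option 0 g z \<partial>measure_pmf \<mu>)"

lemma E_return_None[simp]: "E (return_pmf None) g = 0"
  by (simp add: E_def nn_integral_return)

lemma E_return_Some[simp]: "E (return_pmf (Some x)) g = g x"
  by (simp add: E_def nn_integral_return)

definition kbind :: "state option pmf \<Rightarrow> (state \<Rightarrow> state option pmf) \<Rightarrow> state option pmf" where
  "kbind \<mu> \<nu> = bind_pmf \<mu> (\<lambda>z. case z of None \<Rightarrow> return_pmf None | Some \<tau> \<Rightarrow> \<nu> \<tau>)"

lemma E_kbind: "E (kbind \<mu> \<nu>) g = E \<mu> (\<lambda>\<tau>. E (\<nu> \<tau>) g)"
  unfolding kbind_def E_def nn_integral_bind_pmf
  by (rule nn_integral_cong) (auto split: option.splits simp: nn_integral_return E_def)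

lemma E_mono: "(\<And>\<tau>. g \<tau> \<le> h \<tau>) \<Longrightarrow> E \<mu> g \<le> E \<mu> h"
  unfolding E_def by (rule nn_integral_mono) (auto split: option.splits)

lemma E_add: "E \<mu> (\<lambda>\<tau>. g \<tau> + h \<tau>) = E \<mu> g + E \<mu> h"
proof -
  have "E \<mu> (\<lambda>\<tau>. g \<tau> + h \<tau>) = (\<integral>\<^sup>+z. case_option 0 g z + case_option 0 h z \<partial>measure_pmf \<mu>)"
    unfolding E_def by (rule nn_integral_cong) (auto split: option.splits)
  also have "\<dots> = E \<mu> g + E \<mu> h" unfolding E_def by (rule nn_integral_add) auto
  finally show ?thesis .
qed

lemma E_cmult: "E \<mu> (\<lambda>\<tau>. c * g \<tau>) = c * E \<mu> g"
proof -
  have "E \<mu> (\<lambda>\<tau>. c * g \<tau>) = (\<integral>\<^sup>+z. c * case_option 0 g z \<partial>measure_pmf \<mu>)"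
    unfolding E_def by (rule nn_integral_cong) (auto split: option.splits)
  also have "\<dots> = c * E \<mu> g" unfolding E_def by (rule nn_integral_cmult) auto
  finally show ?thesis .
qed

lemma E_sum: "E \<mu> (\<lambda>\<tau>. \<Sum>k\<in>A. g k \<tau>) = (\<Sum>k\<in>A. E \<mu> (g k))"
proof -
  have "E \<mu> (\<lambda>\<tau>. \<Sum>k\<in>A. g k \<tau>) = (\<integral>\<^sup>+z. (\<Sum>k\<in>A. case_option 0 (g k) z) \<partial>measure_pmf \<mu>)"
    unfolding E_def by (rule nn_integral_cong) (auto split: option.splits)
  also have "\<dots> = (\<Sum>k\<in>A. E \<mu> (g k))" unfolding E_def by (rule nn_integral_sum) auto
  finally show ?thesis .
qed

lemma E_SUP: assumes "\<And>i \<tau>. G i \<tau> \<le> G (Suc i) \<tau>"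
  shows "E \<mu> (\<lambda>\<tau>. SUP i. G i \<tau>) = (SUP i. E \<mu> (G i))"
proof -
  have "E \<mu> (\<lambda>\<tau>. SUP i. G i \<tau>) = (\<integral>\<^sup>+z. (SUP i. case_option 0 (G i) z) \<partial>measure_pmf \<mu>)"
    unfolding E_def by (rule nn_integral_cong) (auto split: option.splits)
  also have "\<dots> = (SUP i. E \<mu> (G i))" unfolding E_def
    apply (rule nn_integral_monotone_convergence_SUP)
     apply (rule incseq_SucI) using assms by (auto simp: le_fun_def split: option.splits)
  finally show ?thesis .
qed

lemma E_one_le: "E \<mu> (\<lambda>_. 1) \<le> 1"
proof -
  have "E \<mu> (\<lambda>_. 1) \<le> (\<integral>\<^sup>+z. 1 \<partial>measure_pmf \<mu>)"
    unfolding E_def by (rule nn_integral_mono) (auto split: option.splits)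
  also have "\<dots> = 1" by (simp add: measure_pmf.emeasure_space_1)
  finally show ?thesis .
qed

definition mixp :: "real \<Rightarrow> state option pmf \<Rightarrow> state option pmf \<Rightarrow> state option pmf" where
  "mixp p \<mu>1 \<mu>2 = bind_pmf (bernoulli_pmf p) (\<lambda>b. if b then \<mu>1 else \<mu>2)"

lemma E_mixp: assumes "0 \<le> p" "p \<le> 1"
  shows "E (mixp p \<mu>1 \<mu>2) g = ennreal p * E \<mu>1 g + ennreal (1 - p) * E \<mu>2 g"
  unfolding mixp_def E_def nn_integral_bind_pmf using assms
  by (simp add: mult.commute)


lemma mono_awp: "g \<le> h \<Longrightarrow> awp C g \<le> awp C h"
proof (induction C arbitrary: g h)
  case (Assign x E)
  then show ?case by (auto simp: subst_def le_fun_def)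
next
  case (Seq C1 C2)
  then show ?case by simp
next
  case (GChoice p1 C1 p2 C2)
  show ?case
  proof (rule le_funI)
    fix x
    have a: "iv p1 x * awp C1 g x \<le> iv p1 x * awp C1 h x"
      using GChoice.IH(1)[OF GChoice.prems] by (simp add: le_fun_def mult_left_mono)
    have b: "iv p2 x * awp C2 g x \<le> iv p2 x * awp C2 h x"
      using GChoice.IH(2)[OF GChoice.prems] by (simp add: le_fun_def mult_left_mono)
    show "awp (GChoice p1 C1 p2 C2) g x \<le> awp (GChoice p1 C1 p2 C2) h x"
      unfolding awp.simps by (rule max.mono[OF a b])
  qed
next
  case (PChoice C1 p C2)
  then show ?case
    by (auto simp: le_fun_def pmix_def intro!: add_mono mult_left_mono)
next
  case (While \<phi> C I)
  show ?case unfolding awp.simps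
  proof (rule lfp_mono)
    fix u
    have "awp C u \<le> awp C u" by simp
    then show "loop_char \<phi> (awp C) g u \<le> loop_char \<phi> (awp C) h u"
      using While.prems by (auto simp: le_fun_def loop_char_def intro!: add_mono mult_left_mono)
  qed
qed simp

lemma mono_ert: "g \<le> h \<Longrightarrow> ert C g \<le> ert C h"
proof (induction C arbitrary: g h)
  case (Assign x E)
  then show ?case by (auto simp: subst_def le_fun_def)
next
  case (Seq C1 C2)
  then show ?case by simp
next
  case (GChoice p1 C1 p2 C2)
  show ?case
  proof (rule le_funI)
    fix x
    have a: "iv p1 x * ert C1 g x \<le> iv p1 x * ert C1 h x"
      using GChoice.IH(1)[OF GChoice.prems] by (simp add: le_fun_def mult_left_mono)
    have b: "iv p2 x * ert C2 g x \<le> iv p2 x * ert C2 h x"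
      using GChoice.IH(2)[OF GChoice.prems] by (simp add: le_fun_def mult_left_mono)
    show "ert (GChoice p1 C1 p2 C2) g x \<le> ert (GChoice p1 C1 p2 C2) h x"
      unfolding ert.simps by (rule add_left_mono[OF max.mono[OF a b]])
  qed
next
  case (PChoice C1 p C2)
  then show ?case
    by (auto simp: le_fun_def pmix_def intro!: add_mono mult_left_mono)
next
  case (While \<phi> C I)
  show ?case unfolding ert.simps
  proof (rule lfp_mono)
    fix u
    show "(\<lambda>\<sigma>. 1 + loop_char \<phi> (ert C) g u \<sigma>) \<le> (\<lambda>\<sigma>. 1 + loop_char \<phi> (ert C) h u \<sigma>)"
      using While.prems by (auto simp: le_fun_def loop_char_def intro!: add_mono mult_left_mono)
  qed
qed (auto simp: le_fun_def)

lemma mono_loop_char: "(\<And>g h. g \<le> h \<Longrightarrow> T g \<le> T h) \<Longrightarrow> mono (loop_char \<phi> T f)"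
  by (auto simp: mono_def le_fun_def loop_char_def intro!: add_mono mult_left_mono)

lemma awp_While_unfold: "awp (While \<phi> C I) f = loop_char \<phi> (awp C) f (awp (While \<phi> C I) f)"
  using lfp_unfold[OF mono_loop_char[of "awp C" \<phi> f]] mono_awp by simp

lemma ert_While_unfold: "ert (While \<phi> C I) f = (\<lambda>\<sigma>. 1 + loop_char \<phi> (ert C) f (ert (While \<phi> C I) f) \<sigma>)"
proof -
  have "mono (\<lambda>g \<sigma>. 1 + loop_char \<phi> (ert C) f g \<sigma>)"
    using mono_loop_char[of "ert C" \<phi> f] mono_ert
    by (auto simp: mono_def le_fun_def intro!: add_mono)
  from lfp_unfold[OF this] show ?thesis by simp
qed

lemma awp_le_ert: "awp C g \<le> ert C g"
proof (induction C arbitrary: g)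
  case Skip
  then show ?case by (auto simp: le_fun_def)
next
  case (Assign x E)
  then show ?case by (auto simp: le_fun_def)
next
  case (Seq C1 C2)
  have "awp C1 (awp C2 g) \<le> awp C1 (ert C2 g)" by (rule mono_awp) (rule Seq.IH(2))
  also have "\<dots> \<le> ert C1 (ert C2 g)" by (rule Seq.IH(1))
  finally show ?case by simp
next
  case (GChoice p1 C1 p2 C2)
  show ?case
  proof (rule le_funI)
    fix x
    have a: "iv p1 x * awp C1 g x \<le> iv p1 x * ert C1 g x"
      using GChoice.IH(1) by (simp add: le_fun_def mult_left_mono)
    have b: "iv p2 x * awp C2 g x \<le> iv p2 x * ert C2 g x"
      using GChoice.IH(2) by (simp add: le_fun_def mult_left_mono)
    show "awp (GChoice p1 C1 p2 C2) g x \<le> ert (GChoice p1 C1 p2 C2) g x"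
      using max.mono[OF a b] by (simp add: add_increasing)
  qed
next
  case (PChoice C1 p C2)
  show ?case
  proof (rule le_funI)
    fix x
    have "pmix p (awp C1 g) (awp C2 g) x \<le> pmix p (ert C1 g) (ert C2 g) x"
      using PChoice.IH unfolding pmix_def le_fun_def by (intro add_mono mult_left_mono) auto
    then show "awp (PChoice C1 p C2) g x \<le> ert (PChoice C1 p C2) g x"
      by (simp add: add_increasing)
  qed
next
  case (While \<phi> C I)
  show ?case unfolding awp.simps
  proof (rule lfp_lowerbound)
    have "loop_char \<phi> (awp C) g (ert (While \<phi> C I) g) \<le> loop_char \<phi> (ert C) g (ert (While \<phi> C I) g)"
      using While.IH by (auto simp: le_fun_def loop_char_def intro!: add_mono mult_left_mono)
    also have "\<dots> \<le> ert (While \<phi> C I) g"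
      by (subst (2) ert_While_unfold) (auto simp: le_fun_def)
    finally show "loop_char \<phi> (awp C) g (ert (While \<phi> C I) g) \<le> ert (While \<phi> C I) g" .
  qed
qed

definition Dom :: "pgcl \<Rightarrow> state \<Rightarrow> state option pmf set" where
  "Dom C x = {\<mu>. \<forall>g. E \<mu> g \<le> awp C g x}"

lemma None_Dom: "return_pmf None \<in> Dom C x"
  by (simp add: Dom_def)

lemma compose:
  assumes F: "\<And>\<tau>. F \<tau> \<le> (SUP \<mu>\<in>S \<tau>. E \<mu> h)" and ne: "\<And>\<tau>. S \<tau> \<noteq> {}" and y: "y < E \<mu>1 F"
  shows "\<exists>\<nu>. (\<forall>\<tau>. \<nu> \<tau> \<in> S \<tau>) \<and> y < E \<mu>1 (\<lambda>\<tau>. E (\<nu> \<tau>) h)"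
proof -
  have ex: "\<exists>f::nat \<Rightarrow> ennreal. incseq f \<and> range f \<subseteq> (\<lambda>\<mu>. E \<mu> h) ` S \<tau> \<and> (SUP \<mu>\<in>S \<tau>. E \<mu> h) = (SUP i. f i)" for \<tau>
    by (rule ennreal_Sup_countable_SUP) (use ne in simp)
  have "\<exists>ff. \<forall>\<tau>. incseq (ff \<tau>) \<and> range (ff \<tau>) \<subseteq> (\<lambda>\<mu>. E \<mu> h) ` S \<tau> \<and> (SUP \<mu>\<in>S \<tau>. E \<mu> h) = (SUP i. ff \<tau> i)"
    by (rule choice) (use ex in blast)
  then obtain ff where ff: "\<And>\<tau>. incseq (ff \<tau>)" "\<And>\<tau>. range (ff \<tau>) \<subseteq> (\<lambda>\<mu>. E \<mu> h) ` S \<tau>"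
    "\<And>\<tau>. (SUP \<mu>\<in>S \<tau>. E \<mu> h) = (SUP i. ff \<tau> i)"
    by blast
  have "y < E \<mu>1 (\<lambda>\<tau>. SUP i. ff \<tau> i)"
    using y E_mono[of F "\<lambda>\<tau>. SUP i. ff \<tau> i" \<mu>1] F ff(3) by (metis order_less_le_trans)
  also have "\<dots> = (SUP i. E \<mu>1 (\<lambda>\<tau>. ff \<tau> i))"
    by (rule E_SUP) (use ff(1) in \<open>auto simp: incseq_Suc_iff\<close>)
  finally obtain i where i: "y < E \<mu>1 (\<lambda>\<tau>. ff \<tau> i)" by (auto simp: less_SUP_iff)
  have "\<exists>\<mu>\<in>S \<tau>. ff \<tau> i = E \<mu> h" for \<tau> using ff(2)[of \<tau>] by auto
  then have "\<exists>\<nu>. \<forall>\<tau>. \<nu> \<tau> \<in> S \<tau> \<and> ff \<tau> i = E (\<nu> \<tau>) h" by metis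
  then obtain \<nu> where \<nu>: "\<And>\<tau>. \<nu> \<tau> \<in> S \<tau>" "\<And>\<tau>. ff \<tau> i = E (\<nu> \<tau>) h" by metis
  show ?thesis using \<nu> i by auto
qed


lemma awp_While_pt: "awp (While \<phi> C I) g \<sigma> = (if \<phi> \<sigma> then awp C (awp (While \<phi> C I) g) \<sigma> else g \<sigma>)"
  by (subst awp_While_unfold) (simp add: loop_char_def iv_def)

lemma ert_While_pt: "ert (While \<phi> C I) g \<sigma> = 1 + (if \<phi> \<sigma> then ert C (ert (While \<phi> C I) g) \<sigma> else g \<sigma>)"
  by (subst ert_While_unfold) (simp add: loop_char_def iv_def)

lemma lt_imp_le: "(\<And>y. y < a \<Longrightarrow> y < b) \<Longrightarrow> (a::ennreal) \<le> b"
  by (metis not_le order.irrefl)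

lemma Dom_ne: "Dom C x \<noteq> {}"
  using None_Dom by blast

lemma lemmaD: "wf_pgcl C \<Longrightarrow> awp C h x \<le> (SUP \<mu>\<in>Dom C x. E \<mu> h)"
proof (induction C arbitrary: h x)
  case Skip
  have "return_pmf (Some x) \<in> Dom Skip x" by (simp add: Dom_def)
  then show ?case by (rule SUP_upper2) simp
next
  case (Assign v e)
  have "return_pmf (Some (upd x v (e x))) \<in> Dom (Assign v e) x" by (simp add: Dom_def subst_def)
  then show ?case by (rule SUP_upper2) (simp add: subst_def)
next
  case (Seq C1 C2)
  then have w1: "wf_pgcl C1" and w2: "wf_pgcl C2" by auto
  show ?case
  proof (rule lt_imp_le)
    fix y assume "y < awp (Seq C1 C2) h x"
    then have "y < (SUP \<mu>1\<in>Dom C1 x. E \<mu>1 (awp C2 h))"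
      using Seq.IH(1)[OF w1, of "awp C2 h" x] by simp
    then obtain \<mu>1 where m1: "\<mu>1 \<in> Dom C1 x" and y: "y < E \<mu>1 (awp C2 h)" by (auto simp: less_SUP_iff)
    obtain \<nu> where nu: "\<And>\<tau>. \<nu> \<tau> \<in> Dom C2 \<tau>" and y2: "y < E \<mu>1 (\<lambda>\<tau>. E (\<nu> \<tau>) h)"
      using compose[where F="awp C2 h" and S="Dom C2" and h=h] Seq.IH(2)[OF w2] Dom_ne y by blast
    have "kbind \<mu>1 \<nu> \<in> Dom (Seq C1 C2) x"
    proof -
      have "E (kbind \<mu>1 \<nu>) g \<le> awp (Seq C1 C2) g x" for g
      proof -
        have "E (kbind \<mu>1 \<nu>) g = E \<mu>1 (\<lambda>\<tau>. E (\<nu> \<tau>) g)" by (rule E_kbind)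
        also have "\<dots> \<le> E \<mu>1 (awp C2 g)" by (rule E_mono) (use nu in \<open>auto simp: Dom_def\<close>)
        also have "\<dots> \<le> awp C1 (awp C2 g) x" using m1 by (auto simp: Dom_def)
        finally show ?thesis by simp
      qed
      then show ?thesis by (simp add: Dom_def)
    qed
    moreover have "E (kbind \<mu>1 \<nu>) h = E \<mu>1 (\<lambda>\<tau>. E (\<nu> \<tau>) h)" by (rule E_kbind)
    ultimately show "y < (SUP \<mu>\<in>Dom (Seq C1 C2) x. E \<mu> h)"
      using y2 by (metis SUP_upper order_less_le_trans)
  qed
next
  case (GChoice p1 C1 p2 C2)
  then have w1: "wf_pgcl C1" and w2: "wf_pgcl C2" by auto
  have a: "iv p1 x * awp C1 h x \<le> (SUP \<mu>\<in>Dom (GChoice p1 C1 p2 C2) x. E \<mu> h)"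
  proof (cases "p1 x")
    case True
    have "Dom C1 x \<subseteq> Dom (GChoice p1 C1 p2 C2) x"
      using True by (auto simp: Dom_def iv_def intro: order_trans[OF _ max.cobounded1])
    then have "(SUP \<mu>\<in>Dom C1 x. E \<mu> h) \<le> (SUP \<mu>\<in>Dom (GChoice p1 C1 p2 C2) x. E \<mu> h)"
      by (rule SUP_subset_mono) simp
    then show ?thesis using GChoice.IH(1)[OF w1, of h x] True by (simp add: iv_def)
  qed (simp add: iv_def)
  have b: "iv p2 x * awp C2 h x \<le> (SUP \<mu>\<in>Dom (GChoice p1 C1 p2 C2) x. E \<mu> h)"
  proof (cases "p2 x")
    case True
    have "Dom C2 x \<subseteq> Dom (GChoice p1 C1 p2 C2) x"
      using True by (auto simp: Dom_def iv_def intro: order_trans[OF _ max.cobounded2])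
    then have "(SUP \<mu>\<in>Dom C2 x. E \<mu> h) \<le> (SUP \<mu>\<in>Dom (GChoice p1 C1 p2 C2) x. E \<mu> h)"
      by (rule SUP_subset_mono) simp
    then show ?thesis using GChoice.IH(2)[OF w2, of h x] True by (simp add: iv_def)
  qed (simp add: iv_def)
  show ?case using a b by simp
next
  case (PChoice C1 p C2)
  then have w1: "wf_pgcl C1" and w2: "wf_pgcl C2" and p: "0 \<le> p x" "p x \<le> 1" by auto
  let ?S1 = "SUP \<mu>\<in>Dom C1 x. E \<mu> h" and ?S2 = "SUP \<mu>\<in>Dom C2 x. E \<mu> h"
  have "awp (PChoice C1 p C2) h x \<le> ennreal (p x) * ?S1 + ennreal (1 - p x) * ?S2"
    using PChoice.IH(1)[OF w1, of h x] PChoice.IH(2)[OF w2, of h x]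
    by (simp add: pmix_def add_mono mult_left_mono)
  also have "\<dots> = (SUP \<mu>1\<in>Dom C1 x. ennreal (p x) * E \<mu>1 h) + (SUP \<mu>2\<in>Dom C2 x. ennreal (1 - p x) * E \<mu>2 h)"
    by (simp add: SUP_mult_left_ennreal)
  also have "\<dots> = (SUP \<mu>1\<in>Dom C1 x. ennreal (p x) * E \<mu>1 h + (SUP \<mu>2\<in>Dom C2 x. ennreal (1 - p x) * E \<mu>2 h))"
    by (rule ennreal_SUP_add_left[symmetric]) (rule Dom_ne)
  also have "\<dots> = (SUP \<mu>1\<in>Dom C1 x. SUP \<mu>2\<in>Dom C2 x. ennreal (p x) * E \<mu>1 h + ennreal (1 - p x) * E \<mu>2 h)"
    by (simp add: ennreal_SUP_add_right Dom_ne)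
  also have "\<dots> \<le> (SUP \<mu>\<in>Dom (PChoice C1 p C2) x. E \<mu> h)"
  proof (intro SUP_least)
    fix \<mu>1 \<mu>2 assume m1: "\<mu>1 \<in> Dom C1 x" and m2: "\<mu>2 \<in> Dom C2 x"
    have "mixp (p x) \<mu>1 \<mu>2 \<in> Dom (PChoice C1 p C2) x"
      using m1 m2 p by (auto simp: Dom_def E_mixp pmix_def intro!: add_mono mult_left_mono)
    then show "ennreal (p x) * E \<mu>1 h + ennreal (1 - p x) * E \<mu>2 h \<le> (SUP \<mu>\<in>Dom (PChoice C1 p C2) x. E \<mu> h)"
      using p by (metis E_mixp SUP_upper)
  qed
  finally show ?case .
next
  case (While \<phi> C I)
  then have w: "wf_pgcl C" by auto
  define A where "A = (\<lambda>\<sigma>. SUP \<mu>\<in>Dom (While \<phi> C I) \<sigma>. E \<mu> h)"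
  have "lfp (loop_char \<phi> (awp C) h) \<le> A"
  proof (rule lfp_lowerbound, rule le_funI)
    fix \<sigma>
    show "loop_char \<phi> (awp C) h A \<sigma> \<le> A \<sigma>"
    proof (cases "\<phi> \<sigma>")
      case False
      have "return_pmf (Some \<sigma>) \<in> Dom (While \<phi> C I) \<sigma>"
        using False by (simp only: Dom_def mem_Collect_eq E_return_Some awp_While_pt if_False order_refl simp_thms)
      then have "h \<sigma> \<le> A \<sigma>" unfolding A_def by (rule SUP_upper2) simp
      then show ?thesis using False by (simp add: loop_char_def iv_def)
    next
      case True
      have "awp C A \<sigma> \<le> A \<sigma>"
      proof (rule lt_imp_le)
        fix y assume "y < awp C A \<sigma>"
        then have "y < (SUP \<mu>1\<in>Dom C \<sigma>. E \<mu>1 A)" using While.IH[OF w, of A \<sigma>] by simp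
        then obtain \<mu>1 where m1: "\<mu>1 \<in> Dom C \<sigma>" and y: "y < E \<mu>1 A" by (auto simp: less_SUP_iff)
        obtain \<nu> where nu: "\<And>\<tau>. \<nu> \<tau> \<in> Dom (While \<phi> C I) \<tau>" and y2: "y < E \<mu>1 (\<lambda>\<tau>. E (\<nu> \<tau>) h)"
          using compose[where F=A and S="Dom (While \<phi> C I)" and h=h] Dom_ne y unfolding A_def by blast
        have "kbind \<mu>1 \<nu> \<in> Dom (While \<phi> C I) \<sigma>"
        proof -
          have "E (kbind \<mu>1 \<nu>) g \<le> awp (While \<phi> C I) g \<sigma>" for g
          proof -
            have "E (kbind \<mu>1 \<nu>) g = E \<mu>1 (\<lambda>\<tau>. E (\<nu> \<tau>) g)" by (rule E_kbind)
            also have "\<dots> \<le> E \<mu>1 (awp (While \<phi> C I) g)" by (rule E_mono) (use nu in \<open>auto simp: Dom_def\<close>)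
            also have "\<dots> \<le> awp C (awp (While \<phi> C I) g) \<sigma>" using m1 by (auto simp: Dom_def)
            finally show ?thesis using True by (subst awp_While_pt) simp
          qed
          then show ?thesis by (simp add: Dom_def)
        qed
        moreover have "E (kbind \<mu>1 \<nu>) h = E \<mu>1 (\<lambda>\<tau>. E (\<nu> \<tau>) h)" by (rule E_kbind)
        ultimately show "y < A \<sigma>"
          using y2 unfolding A_def by (metis SUP_upper order_less_le_trans)
      qed
      then show ?thesis using True by (simp add: loop_char_def iv_def)
    qed
  qed
  then show ?case by (simp add: A_def le_fun_def)
qed


lemma E_const: "E \<mu> (\<lambda>_. c) = c * E \<mu> (\<lambda>_. 1)"
  using E_cmult[of \<mu> c "\<lambda>_. 1"] by simp

lemma le_add_adiff: "(a::ennreal) \<le> b + adiff a b"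
proof -
  have "a \<le> b + (a - b)" by (auto simp: add_diff_self_ennreal not_le intro: less_imp_le)
  also have "\<dots> \<le> b + ((a - b) + (b - a))" by (intro add_left_mono add_increasing2) auto
  finally show ?thesis by (simp add: adiff_def)
qed

lemma adiff_fin: "(a::ennreal) < \<infinity> \<Longrightarrow> b < \<infinity> \<Longrightarrow> adiff a b < \<infinity>"
  unfolding adiff_def infinity_ennreal_def by (simp add: diff_less_top_ennreal)

lemma markov_small:
  fixes t :: "nat \<Rightarrow> ennreal"
  assumes t: "\<And>m. of_nat m * t m \<le> c" and c: "c < \<infinity>" and e: "0 < e"
  shows "\<exists>m. t m \<le> ennreal e"
proof (rule ccontr)
  assume "\<not> ?thesis"
  then have lt: "\<And>m. ennreal e < t m" by (simp add: not_le)
  obtain cr where cr: "c = ennreal cr" "0 \<le> cr" using c by (cases c) (auto simp: infinity_ennreal_def)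
  obtain m :: nat where m: "cr / e < real m" using reals_Archimedean2 by blast
  have "ennreal (real m * e) = of_nat m * ennreal e"
    using e by (simp add: ennreal_mult ennreal_mult' ennreal_of_nat_eq_real_of_nat)
  also have "\<dots> \<le> of_nat m * t m" using lt[of m] by (intro mult_left_mono) auto
  also have "\<dots> \<le> ennreal cr" using t[of m] cr by simp
  finally have "real m * e \<le> cr" using cr(2) by (simp add: ennreal_le_iff)
  with m e show False by (simp add: field_simps)
qed

locale ost_setup =
  fixes \<phi> :: pred and Cb :: pgcl and I f :: expect and K :: "state \<Rightarrow> state option pmf"
    and \<epsilon> :: real and b :: real
  assumes KDom: "\<And>x. K x \<in> Dom Cb x"
    and Kapprox: "\<And>x. \<phi> x \<Longrightarrow> I x \<le> E (K x) I + ennreal \<epsilon>"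
    and Iterm: "\<And>x. \<not> \<phi> x \<Longrightarrow> I x = f x"
    and Ifin: "\<And>x. I x < \<infinity>"
    and bnd: "\<And>x. \<phi> x \<Longrightarrow> awp Cb (\<lambda>\<tau>. adiff (I \<tau>) (I x)) x \<le> ennreal b"
    and Rfin: "\<And>x. ert (While \<phi> Cb I) (\<lambda>_. 0) x < \<infinity>"
begin

definition "R = ert (While \<phi> Cb I) (\<lambda>_. 0)"
definition "L = awp (While \<phi> Cb I) f"
definition P :: "expect \<Rightarrow> expect" where "P g x = iv \<phi> x * E (K x) g"

lemma KE: "E (K x) g \<le> awp Cb g x"
  using KDom[of x] by (auto simp: Dom_def)

lemma P_mono: "(\<And>y. g y \<le> h y) \<Longrightarrow> P g x \<le> P h x"
  unfolding P_def by (intro mult_left_mono E_mono) auto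

lemma P_add: "P (\<lambda>y. g y + h y) x = P g x + P h x"
  unfolding P_def E_add by (simp add: distrib_left)

lemma P_sum: "P (\<lambda>y. \<Sum>k\<in>A. g k y) x = (\<Sum>k\<in>A. P (g k) x)"
  unfolding P_def E_sum by (simp add: sum_distrib_left)

lemma P_notphi[simp]: "\<not> \<phi> x \<Longrightarrow> P g x = 0"
  by (simp add: P_def iv_def)

lemma P_phi[simp]: "\<phi> x \<Longrightarrow> P g x = E (K x) g"
  by (simp add: P_def iv_def)

lemma R_ge: "1 + P R x \<le> R x"
proof (cases "\<phi> x")
  case True
  have "P R x \<le> awp Cb R x" using True KE by simp
  also have "\<dots> \<le> ert Cb R x" using awp_le_ert by (auto simp: le_fun_def)
  moreover have "R x = 1 + ert Cb R x" using True unfolding R_def by (subst ert_While_pt) simp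
  ultimately show ?thesis by (simp add: add_left_mono)
next
  case False
  then show ?thesis unfolding R_def by (subst ert_While_pt) simp
qed

lemma R_ge1: "1 \<le> R x"
  using R_ge[of x] by (metis add_increasing2 order_refl zero_le order_trans le_iff_add)

lemma L_unfold: "L x = (if \<phi> x then awp Cb L x else f x)"
  unfolding L_def by (rule awp_While_pt)

lemma I_step: "I x \<le> iv (\<lambda>s. \<not> \<phi> s) x * f x + ennreal \<epsilon> + P I x"
  using Kapprox[of x] Iterm[of x] by (cases "\<phi> x") (auto simp: iv_def add_ac)

definition A :: "nat \<Rightarrow> expect" where
  "A n = ((\<lambda>g x. iv (\<lambda>s. \<not> \<phi> s) x * f x + ennreal \<epsilon> + P g x) ^^ n) (\<lambda>_. 0)"

lemma A_Suc: "A (Suc n) x = iv (\<lambda>s. \<not> \<phi> s) x * f x + ennreal \<epsilon> + P (A n) x"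
  by (simp add: A_def)

lemma claim1: "I x \<le> A n x + (P ^^ n) I x"
proof (induction n arbitrary: x)
  case 0
  then show ?case by (simp add: A_def)
next
  case (Suc n)
  have "I x \<le> iv (\<lambda>s. \<not> \<phi> s) x * f x + ennreal \<epsilon> + P I x" by (rule I_step)
  also have "\<dots> \<le> iv (\<lambda>s. \<not> \<phi> s) x * f x + ennreal \<epsilon> + P (\<lambda>y. A n y + (P ^^ n) I y) x"
    by (intro add_left_mono P_mono Suc.IH)
  also have "\<dots> = A (Suc n) x + (P ^^ Suc n) I x"
    by (simp add: A_Suc P_add add_ac)
  finally show ?case .
qed

lemma claim2: "A n x \<le> L x + ennreal \<epsilon> * R x"
proof (induction n arbitrary: x)
  case 0
  then show ?case by (simp add: A_def)
next
  case (Suc n)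
  have "A (Suc n) x \<le> iv (\<lambda>s. \<not> \<phi> s) x * f x + ennreal \<epsilon> + P (\<lambda>y. L y + ennreal \<epsilon> * R y) x"
    unfolding A_Suc by (intro add_left_mono P_mono Suc.IH)
  also have "\<dots> \<le> L x + ennreal \<epsilon> * R x"
  proof (cases "\<phi> x")
    case True
    have "P (\<lambda>y. L y + ennreal \<epsilon> * R y) x = E (K x) L + ennreal \<epsilon> * P R x"
      using True by (simp add: E_add E_cmult)
    also have "\<dots> \<le> L x + ennreal \<epsilon> * P R x"
      using KE[of x L] L_unfold[of x] True by (simp add: add_right_mono)
    finally have 1: "P (\<lambda>y. L y + ennreal \<epsilon> * R y) x \<le> L x + ennreal \<epsilon> * P R x" .
    have "ennreal \<epsilon> + ennreal \<epsilon> * P R x = ennreal \<epsilon> * (1 + P R x)" by (simp add: distrib_left)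
    also have "\<dots> \<le> ennreal \<epsilon> * R x" by (intro mult_left_mono R_ge) simp
    finally have 2: "ennreal \<epsilon> + ennreal \<epsilon> * P R x \<le> ennreal \<epsilon> * R x" .
    have "iv (\<lambda>s. \<not> \<phi> s) x * f x + ennreal \<epsilon> + P (\<lambda>y. L y + ennreal \<epsilon> * R y) x
        = P (\<lambda>y. L y + ennreal \<epsilon> * R y) x + ennreal \<epsilon>" using True by (simp add: iv_def add_ac)
    also have "\<dots> \<le> (L x + ennreal \<epsilon> * P R x) + ennreal \<epsilon>" by (rule add_right_mono[OF 1])
    also have "\<dots> = L x + (ennreal \<epsilon> + ennreal \<epsilon> * P R x)" by (simp add: add_ac)
    also have "\<dots> \<le> L x + ennreal \<epsilon> * R x" by (rule add_left_mono[OF 2])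
    finally show ?thesis .
  next
    case False
    have "ennreal \<epsilon> \<le> ennreal \<epsilon> * R x" using R_ge1[of x]
      by (metis mult.right_neutral mult_left_mono zero_le)
    then show ?thesis using False L_unfold[of x] by (simp add: iv_def add_left_mono)
  qed
  finally show ?case .
qed

lemma step1: "I x \<le> L x + ennreal \<epsilon> * R x + (P ^^ n) I x"
  using claim1[of x n] claim2[of n x] by (meson add_right_mono order_trans)


definition Pt :: "(state \<times> ennreal \<Rightarrow> ennreal) \<Rightarrow> state \<times> ennreal \<Rightarrow> ennreal" where
  "Pt G z = iv \<phi> (fst z) * E (K (fst z)) (\<lambda>\<tau>. G (\<tau>, snd z + adiff (I \<tau>) (I (fst z))))"

definition Th :: "(state \<times> ennreal \<Rightarrow> ennreal) \<Rightarrow> state \<times> ennreal \<Rightarrow> ennreal" where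
  "Th G z = iv (\<lambda>s. \<not> \<phi> s) (fst z) * snd z
     + iv \<phi> (fst z) * ((1 - E (K (fst z)) (\<lambda>_. 1)) * snd z) + Pt G z"

lemma Pt_mono: "(\<And>z. G z \<le> H z) \<Longrightarrow> Pt G z \<le> Pt H z"
  unfolding Pt_def by (intro mult_left_mono E_mono) auto

lemma Pt_add: "Pt (\<lambda>z. G z + H z) z = Pt G z + Pt H z"
  unfolding Pt_def E_add by (simp add: distrib_left)

lemma Ptn_mono: "(\<And>z. G z \<le> H z) \<Longrightarrow> (Pt ^^ n) G z \<le> (Pt ^^ n) H z"
  by (induction n arbitrary: z) (auto intro!: Pt_mono)

lemma Th_mono: "(\<And>z. G z \<le> H z) \<Longrightarrow> Th G z \<le> Th H z"
  unfolding Th_def by (intro add_left_mono Pt_mono) auto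

lemma Thn_mono: "(\<And>z. G z \<le> H z) \<Longrightarrow> (Th ^^ n) G z \<le> (Th ^^ n) H z"
  by (induction n arbitrary: z) (auto intro!: Th_mono)

definition Gs :: "state \<times> ennreal \<Rightarrow> ennreal" where
  "Gs z = (if snd z = \<infinity> then 0 else snd z)"

lemma claim3: "s < \<infinity> \<Longrightarrow> I x \<le> s \<Longrightarrow> (P ^^ n) I x \<le> (Pt ^^ n) Gs (x, s)"
proof (induction n arbitrary: x s)
  case 0
  then show ?case by (simp add: Gs_def)
next
  case (Suc n)
  have "(P ^^ Suc n) I x = iv \<phi> x * E (K x) ((P ^^ n) I)" by (simp add: P_def)
  also have "\<dots> \<le> iv \<phi> x * E (K x) (\<lambda>\<tau>. (Pt ^^ n) Gs (\<tau>, s + adiff (I \<tau>) (I x)))"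
  proof (intro mult_left_mono E_mono Suc.IH)
    fix \<tau>
    show "s + adiff (I \<tau>) (I x) < \<infinity>"
      using Suc.prems(1) adiff_fin[OF Ifin Ifin] by (simp add: infinity_ennreal_def)
    have "I \<tau> \<le> I x + adiff (I \<tau>) (I x)" by (rule le_add_adiff)
    also have "\<dots> \<le> s + adiff (I \<tau>) (I x)" using Suc.prems(2) by (rule add_right_mono)
    finally show "I \<tau> \<le> s + adiff (I \<tau>) (I x)" .
  qed simp
  also have "\<dots> = (Pt ^^ Suc n) Gs (x, s)" by (simp add: Pt_def)
  finally show ?case .
qed

lemma claim4: "(Th ^^ n) G = (\<lambda>z. (Th ^^ n) (\<lambda>_. 0) z + (Pt ^^ n) G z)"
proof (induction n)
  case 0
  then show ?case by simp
next
  case (Suc n)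
  show ?case
  proof
    fix z
    have "(Th ^^ Suc n) G z = Th (\<lambda>z. (Th ^^ n) (\<lambda>_. 0) z + (Pt ^^ n) G z) z"
      using Suc.IH by simp
    also have "\<dots> = (Th ^^ Suc n) (\<lambda>_. 0) z + (Pt ^^ Suc n) G z"
      by (simp add: Th_def Pt_add add_ac)
    finally show "(Th ^^ Suc n) G z = (Th ^^ Suc n) (\<lambda>_. 0) z + (Pt ^^ Suc n) G z" .
  qed
qed

lemma claim5: "(Th ^^ m) (\<lambda>_. 0) z \<le> (Th ^^ Suc m) (\<lambda>_. 0) z"
proof (induction m arbitrary: z)
  case 0
  then show ?case by simp
next
  case (Suc m)
  have "(Th ^^ Suc m) (\<lambda>_. 0) z = Th ((Th ^^ m) (\<lambda>_. 0)) z" by simp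
  also have "\<dots> \<le> Th ((Th ^^ Suc m) (\<lambda>_. 0)) z" by (rule Th_mono) (rule Suc.IH)
  also have "\<dots> = (Th ^^ Suc (Suc m)) (\<lambda>_. 0) z" by simp
  finally show ?case .
qed

definition Q :: "state \<times> ennreal \<Rightarrow> ennreal" where
  "Q z = (SUP m. (Th ^^ m) (\<lambda>_. 0) z)"

lemma Pt_SUP: "(\<And>m z. H m z \<le> H (Suc m) z) \<Longrightarrow> Pt (\<lambda>z. SUP m. H m z) z = (SUP m. Pt (H m) z)"
  unfolding Pt_def by (subst E_SUP) (auto simp: SUP_mult_left_ennreal)

lemma PtSUP: "(\<And>m z. G m z \<le> G (Suc m) z) \<Longrightarrow> (Pt ^^ n) (\<lambda>z. SUP m. G m z) z = (SUP m. (Pt ^^ n) (G m) z)"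
proof (induction n arbitrary: z)
  case 0
  then show ?case by simp
next
  case (Suc n)
  have eq: "(Pt ^^ n) (\<lambda>z. SUP m. G m z) = (\<lambda>z. SUP m. (Pt ^^ n) (G m) z)"
    using Suc by auto
  have "(Pt ^^ Suc n) (\<lambda>z. SUP m. G m z) z = Pt (\<lambda>z. SUP m. (Pt ^^ n) (G m) z) z"
    using eq by simp
  also have "\<dots> = (SUP m. Pt ((Pt ^^ n) (G m)) z)"
    by (rule Pt_SUP) (rule Ptn_mono, rule Suc.prems)
  finally show ?case by simp
qed

lemma claim6: "(Th ^^ n) (\<lambda>_. 0) z + (Pt ^^ n) Q z \<le> Q z"
proof -
  have "(Pt ^^ n) Q z = (SUP m. (Pt ^^ n) ((Th ^^ m) (\<lambda>_. 0)) z)"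
    unfolding Q_def by (rule PtSUP) (rule claim5)
  then have "(Th ^^ n) (\<lambda>_. 0) z + (Pt ^^ n) Q z = (SUP m. (Th ^^ n) (\<lambda>_. 0) z + (Pt ^^ n) ((Th ^^ m) (\<lambda>_. 0)) z)"
    by (simp add: ennreal_SUP_add_right)
  also have "\<dots> = (SUP m. (Th ^^ (n + m)) (\<lambda>_. 0) z)"
  proof -
    have "(Th ^^ n) (\<lambda>_. 0) z + (Pt ^^ n) ((Th ^^ m) (\<lambda>_. 0)) z = (Th ^^ (n + m)) (\<lambda>_. 0) z" for m
      using fun_cong[OF claim4[of n "(Th ^^ m) (\<lambda>_. 0)"], of z] by (simp add: funpow_add)
    then show ?thesis by simp
  qed
  also have "\<dots> \<le> Q z" unfolding Q_def by (rule SUP_mono) blast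
  finally show ?thesis .
qed


lemma k_le1: "E (K x) (\<lambda>_. 1) \<le> 1" by (rule E_one_le)

lemma k_split: "(1 - E (K x) (\<lambda>_. 1)) * s + s * E (K x) (\<lambda>_. 1) = s"
proof -
  have "(1 - E (K x) (\<lambda>_. 1)) * s + s * E (K x) (\<lambda>_. 1) = ((1 - E (K x) (\<lambda>_. 1)) + E (K x) (\<lambda>_. 1)) * s"
    by (simp add: algebra_simps)
  also have "\<dots> = s" using diff_add_cancel_ennreal[OF k_le1[of x]] by simp
  finally show ?thesis .
qed

lemma claim7: "(Th ^^ m) (\<lambda>_. 0) (x, s) \<le> s + ennreal b * R x"
proof (induction m arbitrary: x s)
  case 0
  then show ?case by simp
next
  case (Suc m)
  have IH: "(Th ^^ m) (\<lambda>_. 0) z \<le> snd z + ennreal b * R (fst z)" for z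
    using Suc.IH[of "fst z" "snd z"] by simp
  have "(Th ^^ Suc m) (\<lambda>_. 0) (x, s) \<le> Th (\<lambda>z. snd z + ennreal b * R (fst z)) (x, s)"
    by (simp, rule Th_mono, rule IH)
  also have "\<dots> \<le> s + ennreal b * R x"
  proof (cases "\<phi> x")
    case True
    let ?k = "E (K x) (\<lambda>_. 1)"
    have "E (K x) (\<lambda>\<tau>. s + adiff (I \<tau>) (I x) + ennreal b * R \<tau>)
        = s * ?k + E (K x) (\<lambda>\<tau>. adiff (I \<tau>) (I x)) + ennreal b * E (K x) R"
      by (simp add: E_add E_cmult E_const[of _ s])
    also have "\<dots> \<le> s * ?k + ennreal b + ennreal b * E (K x) R"
      using KE[of x "\<lambda>\<tau>. adiff (I \<tau>) (I x)"] bnd[OF True]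
      by (intro add_mono order_refl) auto
    finally have 1: "E (K x) (\<lambda>\<tau>. s + adiff (I \<tau>) (I x) + ennreal b * R \<tau>)
        \<le> s * ?k + ennreal b + ennreal b * E (K x) R" .
    have "Th (\<lambda>z. snd z + ennreal b * R (fst z)) (x, s)
        = (1 - ?k) * s + E (K x) (\<lambda>\<tau>. s + adiff (I \<tau>) (I x) + ennreal b * R \<tau>)"
      using True by (simp add: Th_def Pt_def iv_def)
    also have "\<dots> \<le> (1 - ?k) * s + (s * ?k + ennreal b + ennreal b * E (K x) R)"
      by (rule add_left_mono[OF 1])
    also have "\<dots> = s + ennreal b * (1 + E (K x) R)"
      using k_split[of x s] by (simp add: distrib_left add_ac)
    also have "\<dots> \<le> s + ennreal b * R x"
      using R_ge[of x] True by (intro add_left_mono mult_left_mono) auto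
    finally show ?thesis .
  next
    case False
    then show ?thesis by (simp add: Th_def Pt_def iv_def)
  qed
  finally show ?case .
qed

definition Th1 :: "expect \<Rightarrow> expect" where
  "Th1 g x = iv (\<lambda>s. \<not> \<phi> s) x + iv \<phi> x * ((1 - E (K x) (\<lambda>_. 1)) + E (K x) g)"

lemma claim8a: "s * (Th1 ^^ m) (\<lambda>_. 0) x \<le> (Th ^^ m) (\<lambda>_. 0) (x, s)"
proof (induction m arbitrary: x s)
  case 0
  then show ?case by simp
next
  case (Suc m)
  show ?case
  proof (cases "\<phi> x")
    case True
    let ?k = "E (K x) (\<lambda>_. 1)"
    have "s * (Th1 ^^ Suc m) (\<lambda>_. 0) x = (1 - ?k) * s + E (K x) (\<lambda>\<tau>. s * (Th1 ^^ m) (\<lambda>_. 0) \<tau>)"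
      using True by (simp add: Th1_def iv_def E_cmult distrib_left mult.commute)
    also have "\<dots> \<le> (1 - ?k) * s + E (K x) (\<lambda>\<tau>. (Th ^^ m) (\<lambda>_. 0) (\<tau>, s + adiff (I \<tau>) (I x)))"
    proof (intro add_left_mono E_mono)
      fix \<tau>
      have "s * (Th1 ^^ m) (\<lambda>_. 0) \<tau> \<le> (s + adiff (I \<tau>) (I x)) * (Th1 ^^ m) (\<lambda>_. 0) \<tau>"
        by (intro mult_right_mono add_increasing2) auto
      also have "\<dots> \<le> (Th ^^ m) (\<lambda>_. 0) (\<tau>, s + adiff (I \<tau>) (I x))" by (rule Suc.IH)
      finally show "s * (Th1 ^^ m) (\<lambda>_. 0) \<tau> \<le> (Th ^^ m) (\<lambda>_. 0) (\<tau>, s + adiff (I \<tau>) (I x))" .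
    qed
    also have "\<dots> = (Th ^^ Suc m) (\<lambda>_. 0) (x, s)"
      using True by (simp add: Th_def Pt_def iv_def)
    finally show ?thesis .
  next
    case False
    then show ?thesis by (simp add: Th_def Th1_def Pt_def iv_def)
  qed
qed

definition W :: "nat \<Rightarrow> expect" where "W m = (P ^^ m) (\<lambda>_. 1)"

lemma claim8b: "1 \<le> (Th1 ^^ m) (\<lambda>_. 0) x + W m x"
proof (induction m arbitrary: x)
  case 0
  then show ?case by (simp add: W_def)
next
  case (Suc m)
  show ?case
  proof (cases "\<phi> x")
    case True
    let ?k = "E (K x) (\<lambda>_. 1)"
    have "1 = (1 - ?k) + ?k" using diff_add_cancel_ennreal[OF k_le1[of x]] by simp
    also have "\<dots> \<le> (1 - ?k) + E (K x) (\<lambda>\<tau>. (Th1 ^^ m) (\<lambda>_. 0) \<tau> + W m \<tau>)"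
      by (intro add_left_mono E_mono Suc.IH)
    also have "\<dots> = (Th1 ^^ Suc m) (\<lambda>_. 0) x + W (Suc m) x"
      using True by (simp add: Th1_def iv_def E_add W_def add_ac)
    finally show ?thesis .
  next
    case False
    then show ?thesis by (simp add: Th1_def iv_def)
  qed
qed

lemma W_sum: "(\<Sum>k<m. W k x) \<le> R x"
proof (induction m arbitrary: x)
  case 0
  then show ?case by simp
next
  case (Suc m)
  have "(\<Sum>k<Suc m. W k x) = W 0 x + (\<Sum>k<m. W (Suc k) x)" by (rule sum.lessThan_Suc_shift)
  also have "\<dots> = 1 + P (\<lambda>y. \<Sum>k<m. W k y) x" by (simp add: W_def P_sum)
  also have "\<dots> \<le> 1 + P R x" by (intro add_left_mono P_mono Suc.IH)
  also have "\<dots> \<le> R x" by (rule R_ge)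
  finally show ?case .
qed

lemma P1: "P (\<lambda>_. 1) x \<le> 1"
  by (cases "\<phi> x") (auto intro: E_one_le)

lemma Pn_mono: "(\<And>y. g y \<le> h y) \<Longrightarrow> (P ^^ n) g x \<le> (P ^^ n) h x"
  by (induction n arbitrary: x) (auto intro!: P_mono)

lemma W_Suc: "W (Suc k) x \<le> W k x"
  unfolding W_def funpow_Suc_right o_def by (rule Pn_mono) (rule P1)

lemma W_anti: "k \<le> m \<Longrightarrow> W m x \<le> W k x"
proof (induction m)
  case 0
  then show ?case by simp
next
  case (Suc m)
  then show ?case by (metis W_Suc le_Suc_eq order_refl order_trans)
qed

lemma claim8c: "of_nat m * W m x \<le> R x"
proof -
  have "of_nat m * W m x = (\<Sum>k<m. W m x)" by simp
  also have "\<dots> \<le> (\<Sum>k<m. W k x)" by (intro sum_mono W_anti) simp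
  also have "\<dots> \<le> R x" by (rule W_sum)
  finally show ?thesis .
qed


lemma Th_le_Q: "(Th ^^ m) (\<lambda>_. 0) z \<le> Q z"
  unfolding Q_def by (rule SUP_upper) simp

lemma claim8: assumes s: "s < \<infinity>" shows "s \<le> Q (x, s)"
proof (rule ennreal_le_epsilon)
  fix e :: real assume e: "0 < e"
  have key: "s \<le> Q (x, s) + s * W m x" for m
  proof -
    have "s = s * 1" by simp
    also have "\<dots> \<le> s * ((Th1 ^^ m) (\<lambda>_. 0) x + W m x)" by (intro mult_left_mono claim8b) simp
    also have "\<dots> = s * (Th1 ^^ m) (\<lambda>_. 0) x + s * W m x" by (simp add: distrib_left)
    also have "\<dots> \<le> Q (x, s) + s * W m x"
      by (intro add_right_mono order_trans[OF claim8a Th_le_Q])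
    finally show ?thesis .
  qed
  have t: "of_nat m * (s * W m x) \<le> s * R x" for m
  proof -
    have "of_nat m * (s * W m x) = s * (of_nat m * W m x)" by (simp add: ac_simps)
    also have "\<dots> \<le> s * R x" by (intro mult_left_mono claim8c) simp
    finally show ?thesis .
  qed
  have c: "s * R x < \<infinity>"
    using s Rfin[of x] unfolding R_def infinity_ennreal_def by (simp add: ennreal_mult_less_top)
  obtain m where "s * W m x \<le> ennreal e" using markov_small[of "\<lambda>m. s * W m x" "s * R x" e, OF t c e] by blast
  then show "s \<le> Q (x, s) + ennreal e" using key[of m] by (meson add_left_mono order_trans)
qed

lemma Gs_le_Q: "Gs z \<le> Q z"
  using claim8[of "snd z" "fst z"] by (auto simp: Gs_def infinity_ennreal_def less_top)

lemma step2: assumes e: "0 < e" shows "\<exists>n. (P ^^ n) I x \<le> ennreal e"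
proof -
  define z0 where "z0 = (x, I x)"
  have "Q z0 \<le> I x + ennreal b * R x"
    unfolding Q_def z0_def by (rule SUP_least) (rule claim7)
  also have "\<dots> < \<infinity>"
    using Ifin[of x] Rfin[of x] unfolding R_def infinity_ennreal_def
    by (simp add: ennreal_mult_less_top)
  finally have Qfin: "Q z0 < \<infinity>" .
  have "Q z0 + 0 < Q z0 + ennreal e"
    using Qfin e by (subst ennreal_add_left_cancel_less) (auto simp: infinity_ennreal_def)
  also have "\<dots> = (SUP m. (Th ^^ m) (\<lambda>_. 0) z0 + ennreal e)"
    unfolding Q_def by (rule ennreal_SUP_add_left[symmetric]) simp
  finally obtain n where "Q z0 < (Th ^^ n) (\<lambda>_. 0) z0 + ennreal e"
    by (auto simp: less_SUP_iff)
  then have n: "Q z0 \<le> (Th ^^ n) (\<lambda>_. 0) z0 + ennreal e" by simp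
  have "(Th ^^ n) (\<lambda>_. 0) z0 + (Pt ^^ n) Q z0 \<le> (Th ^^ n) (\<lambda>_. 0) z0 + ennreal e"
    using claim6[of n z0] n by (rule order_trans)
  moreover have "(Th ^^ n) (\<lambda>_. 0) z0 \<noteq> \<infinity>"
    using Th_le_Q[of n z0] Qfin by (auto simp: infinity_ennreal_def top_unique)
  ultimately have "(Pt ^^ n) Q z0 \<le> ennreal e"
    by (simp add: ennreal_add_left_cancel_le infinity_ennreal_def)
  moreover have "(P ^^ n) I x \<le> (Pt ^^ n) Q z0"
  proof -
    have "(P ^^ n) I x \<le> (Pt ^^ n) Gs z0"
      unfolding z0_def by (rule claim3) (use Ifin in auto)
    also have "\<dots> \<le> (Pt ^^ n) Q z0" by (rule Ptn_mono) (rule Gs_le_Q)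
    finally show ?thesis .
  qed
  ultimately show ?thesis by (meson order_trans)
qed

lemma final_bound: "0 < e \<Longrightarrow> I x \<le> L x + ennreal \<epsilon> * R x + ennreal e"
  using step2[of e x] step1[of x] by (meson add_left_mono order_trans)

end


lemma approx_K:
  assumes wf: "wf_pgcl Cb" and fin: "awp Cb I x < \<infinity>" and e: "0 < \<epsilon>"
  shows "\<exists>\<mu>\<in>Dom Cb x. awp Cb I x \<le> E \<mu> I + ennreal \<epsilon>"
proof -
  have "awp Cb I x + 0 < awp Cb I x + ennreal \<epsilon>"
    using fin e by (subst ennreal_add_left_cancel_less) (auto simp: infinity_ennreal_def)
  also have "\<dots> \<le> (SUP \<mu>\<in>Dom Cb x. E \<mu> I) + ennreal \<epsilon>"
    by (intro add_right_mono lemmaD wf)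
  also have "\<dots> = (SUP \<mu>\<in>Dom Cb x. E \<mu> I + ennreal \<epsilon>)"
    by (rule ennreal_SUP_add_left[symmetric]) (rule Dom_ne)
  finally obtain \<mu> where "\<mu> \<in> Dom Cb x" "awp Cb I x < E \<mu> I + ennreal \<epsilon>"
    by (auto simp: less_SUP_iff)
  then show ?thesis by (auto intro: less_imp_le)
qed

lemma ost:
  assumes wf: "wf_pgcl Cb"
    and sub: "\<And>\<sigma>. I \<sigma> \<le> iv \<phi> \<sigma> * awp Cb I \<sigma> + iv (\<lambda>s. \<not> \<phi> s) \<sigma> * f \<sigma>"
    and dp: "dPAST (While \<phi> Cb I)"
    and os: "suitable_os \<phi> Cb I f"
  shows "I \<le> awp (While \<phi> Cb I) f"
proof (rule le_funI)
  fix x0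
  from os obtain I' b where Ieq: "I = (\<lambda>\<sigma>. iv \<phi> \<sigma> * I' \<sigma> + iv (\<lambda>s. \<not> \<phi> s) \<sigma> * f \<sigma>)"
    and Ifin: "\<And>\<sigma>. I \<sigma> < \<infinity>"
    and awfin: "\<And>\<sigma>. iv \<phi> \<sigma> * awp Cb I \<sigma> + iv (\<lambda>s. \<not> \<phi> s) \<sigma> * f \<sigma> < \<infinity>"
    and bnd: "\<And>\<sigma>. iv \<phi> \<sigma> * awp Cb (\<lambda>\<tau>. adiff (I \<tau>) (I \<sigma>)) \<sigma> \<le> ennreal b"
    unfolding suitable_os_def by blast
  have Iterm: "\<not> \<phi> x \<Longrightarrow> I x = f x" for x by (subst Ieq) (simp add: iv_def)
  have bnd': "\<phi> x \<Longrightarrow> awp Cb (\<lambda>\<tau>. adiff (I \<tau>) (I x)) x \<le> ennreal b" for x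
    using bnd[of x] by (simp add: iv_def)
  have awfin': "\<phi> x \<Longrightarrow> awp Cb I x < \<infinity>" for x
    using awfin[of x] by (simp add: iv_def)
  have sub': "\<phi> x \<Longrightarrow> I x \<le> awp Cb I x" for x
    using sub[of x] by (simp add: iv_def)
  have Rfin: "\<And>x. ert (While \<phi> Cb I) (\<lambda>_. 0) x < \<infinity>"
    using dp by (simp add: dPAST_def)
  show "I x0 \<le> awp (While \<phi> Cb I) f x0"
  proof (rule ennreal_le_epsilon)
    fix e :: real assume e: "0 < e"
    define r where "r = enn2real (ert (While \<phi> Cb I) (\<lambda>_. 0) x0)"
    have r: "ert (While \<phi> Cb I) (\<lambda>_. 0) x0 = ennreal r" "0 \<le> r"
      using Rfin[of x0] unfolding r_def by (auto simp: infinity_ennreal_def less_top[symmetric] enn2real_nonneg)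
    define \<epsilon> where "\<epsilon> = e / (2 * (r + 1))"
    have eps: "0 < \<epsilon>" using e r(2) by (simp add: \<epsilon>_def)
    have "\<exists>\<mu>\<in>Dom Cb x. \<phi> x \<longrightarrow> I x \<le> E \<mu> I + ennreal \<epsilon>" for x
    proof (cases "\<phi> x")
      case True
      obtain \<mu> where "\<mu> \<in> Dom Cb x" "awp Cb I x \<le> E \<mu> I + ennreal \<epsilon>"
        using approx_K[OF wf awfin'[OF True] eps] by blast
      then show ?thesis using sub'[OF True] by (meson order_trans)
    next
      case False
      then show ?thesis using None_Dom by blast
    qed
    then obtain K where K: "\<And>x. K x \<in> Dom Cb x" "\<And>x. \<phi> x \<Longrightarrow> I x \<le> E (K x) I + ennreal \<epsilon>"
      by metis
    interpret ost_setup \<phi> Cb I f K \<epsilon> b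
      by unfold_locales (use K Iterm Ifin bnd' Rfin in auto)
    have "I x0 \<le> L x0 + ennreal \<epsilon> * R x0 + ennreal (e / 2)"
      by (rule final_bound) (use e in simp)
    also have "ennreal \<epsilon> * R x0 \<le> ennreal (e / 2)"
    proof -
      have "ennreal \<epsilon> * R x0 = ennreal (\<epsilon> * r)"
        using r eps by (simp add: R_def ennreal_mult)
      also have "\<epsilon> * r \<le> e / 2"
        using e r(2) by (simp add: \<epsilon>_def field_simps)
      then have "ennreal (\<epsilon> * r) \<le> ennreal (e / 2)" by (rule ennreal_leI)
      finally show ?thesis .
    qed
    then have "L x0 + ennreal \<epsilon> * R x0 + ennreal (e / 2) \<le> L x0 + ennreal (e / 2) + ennreal (e / 2)"
      by (intro add_mono order_refl)
    also have "\<dots> = L x0 + ennreal e"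
      using e by (simp add: add.assoc ennreal_plus[symmetric] del: ennreal_plus)
    finally show "I x0 \<le> awp (While \<phi> Cb I) f x0 + ennreal e" by (simp add: L_def)
  qed
qed

lemma vc_sound: "wf_pgcl C \<Longrightarrow> vc_awp dPASTSUBINV C f \<Longrightarrow> awp_star C f \<le> awp C f"
proof (induction C arbitrary: f)
  case (Seq C1 C2)
  have "awp_star C1 (awp_star C2 f) \<le> awp C1 (awp_star C2 f)" using Seq by simp
  also have "\<dots> \<le> awp C1 (awp C2 f)" by (rule mono_awp) (use Seq in simp)
  finally show ?case by simp
next
  case (GChoice p1 C1 p2 C2)
  then have h1: "awp_star C1 f \<le> awp C1 f" and h2: "awp_star C2 f \<le> awp C2 f" by auto
  show ?case
  proof (rule le_funI)
    fix x
    have a: "iv p1 x * awp_star C1 f x \<le> iv p1 x * awp C1 f x"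
      using h1 by (simp add: le_fun_def mult_left_mono)
    have b: "iv p2 x * awp_star C2 f x \<le> iv p2 x * awp C2 f x"
      using h2 by (simp add: le_fun_def mult_left_mono)
    show "awp_star (GChoice p1 C1 p2 C2) f x \<le> awp (GChoice p1 C1 p2 C2) f x"
      unfolding awp.simps awp_star.simps by (rule max.mono[OF a b])
  qed
next
  case (PChoice C1 p C2)
  then have h1: "awp_star C1 f \<le> awp C1 f" and h2: "awp_star C2 f \<le> awp C2 f" by auto
  show ?case
    using h1 h2 unfolding awp.simps awp_star.simps pmix_def le_fun_def
    by (intro allI add_mono mult_left_mono) auto
next
  case (While \<phi> C I)
  from While.prems have wf: "wf_pgcl C" and dps: "dPASTSUBINV (While \<phi> C I) f" and vcC: "vc_awp dPASTSUBINV C I"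
    by auto
  have IH: "awp_star C I \<le> awp C I" using While.IH[OF wf vcC] .
  from dps have sub0: "\<And>\<sigma>. I \<sigma> \<le> iv \<phi> \<sigma> * awp_star C I \<sigma> + iv (\<lambda>s. \<not> \<phi> s) \<sigma> * f \<sigma>"
    and dp: "dPAST (While \<phi> C I)" and os: "suitable_os \<phi> C I f" by auto
  have sub: "I \<sigma> \<le> iv \<phi> \<sigma> * awp C I \<sigma> + iv (\<lambda>s. \<not> \<phi> s) \<sigma> * f \<sigma>" for \<sigma>
  proof -
    have "iv \<phi> \<sigma> * awp_star C I \<sigma> \<le> iv \<phi> \<sigma> * awp C I \<sigma>"
      using IH by (simp add: le_fun_def mult_left_mono)
    then show ?thesis using sub0[of \<sigma>] by (meson add_right_mono order_trans)
  qed
  show ?case using ost[OF wf sub dp os] by simp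
qed auto

theorem theorem6p12:
  fixes \<phi> :: pred and Cbody :: pgcl and I f :: expect
  assumes "wf_pgcl (While \<phi> Cbody I)"
    and "vc_awp dPASTSUBINV (While \<phi> Cbody I) f"
  shows "I \<le> awp (While \<phi> Cbody I) f"
  using vc_sound[OF assms] by simp

end
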